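(* Let $n\ge2$ be an integer and $\tau=\inf\{t\ge0: p_t\ge n\}$ for the Markov chain $(p_t)$ with $p_0=1$ defined in the context. Then $\mathbb{P}\big(\tau\ge (n^2-n+3)/2\big)\le 1/2$.
   Context: $(p_t)_{t\ge0}$ is a time-homogeneous Markov chain on the positive integers with $p_0=1$ and transitions: if $p_t=p\ge2$, then $\mathbb{P}(p_{t+1}=p+j)=(1/2)^{j+2}$ for $j\in\{-1,0,1,2,\dots\}$; if $p_t=1$, then $\mathbb{P}(p_{t+1}=1+j)=(1/2)^{j+1}$ for $j\in\{0,1,2,\dots\}$. *)

theory Defs
  imports "HOL-Probability.Probability"
begin

text \<open>One-step transition law of the chain.  For p \<ge> 2: P(p+j) = (1/2)^(j+2), j \<ge> -1;
  for p = 1: P(1+j) = (1/2)^(j+1), j \<ge> 0.  (geometric_pmf (1/2) gives i with prob. (1/2)^(i+1).)\<close>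
definition trans_pmf :: "nat \<Rightarrow> nat pmf" where
  "trans_pmf p = (if p \<le> 1 then map_pmf (\<lambda>i. 1 + i) (geometric_pmf (1/2))
                  else map_pmf (\<lambda>i. p - 1 + i) (geometric_pmf (1/2)))"

fun path_pmf :: "nat \<Rightarrow> nat list pmf" where
  "path_pmf 0 = return_pmf [1]"
| "path_pmf (Suc k) = bind_pmf (path_pmf k) (\<lambda>xs. map_pmf (\<lambda>y. xs @ [y]) (trans_pmf (last xs)))"

text \<open>P(tau \<ge> x) where tau = inf{t \<ge> 0 : p_t \<ge> n} (inf of the empty set = \<infinity>):
  the event tau \<ge> x is the event that p_t < n for every integer time t \<ge> 0 with t < x.
  These times all lie in {0..ceil x}, so the path up to time nat ceil x suffices.\<close>
definition prob_tau_ge :: "nat \<Rightarrow> real \<Rightarrow> real" where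
  "prob_tau_ge n x = measure_pmf.prob (path_pmf (nat \<lceil>x\<rceil>))
      {xs. \<forall>t < length xs. real t < x \<longrightarrow> xs ! t < n}"

end

theory Submission
  imports Defs
begin

definition tb :: "nat \<Rightarrow> nat" where "tb p = (if p \<le> 1 then 1 else p - 1)"

lemma trans_pmf_tb: "trans_pmf p = map_pmf (\<lambda>i. tb p + i) (geometric_pmf (1/2))"
  by (simp add: trans_pmf_def tb_def)

lemma pmf_trans: "pmf (trans_pmf p) q = (if tb p \<le> q then (1/2::real)^(q - tb p + 1) else 0)"
proof (cases "tb p \<le> q")
  case True
  then have q: "q = tb p + (q - tb p)" by simp
  have "pmf (trans_pmf p) q = pmf (map_pmf (\<lambda>i. tb p + i) (geometric_pmf (1/2))) (tb p + (q - tb p))"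
    using q trans_pmf_tb by metis
  also have "\<dots> = pmf (geometric_pmf (1/2)) (q - tb p)"
    by (rule pmf_map_inj') (auto simp: inj_def)
  also have "\<dots> = (1/2::real)^(q - tb p + 1)" by simp
  finally show ?thesis using True by simp
next
  case False
  have "q \<notin> set_pmf (trans_pmf p)" using False by (auto simp: trans_pmf_tb)
  then show ?thesis using False by (simp add: set_pmf_iff)
qed

lemma path_len: "xs \<in> set_pmf (path_pmf k) \<Longrightarrow> length xs = Suc k"
  by (induction k arbitrary: xs) auto

definition alive :: "nat \<Rightarrow> nat list \<Rightarrow> bool" where
  "alive n xs = (\<forall>t<length xs. xs ! t < n)"

lemma alive_snoc: "alive n (xs @ [y]) = (alive n xs \<and> y < n)"
  unfolding alive_def by (auto simp: nth_append less_Suc_eq)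

definition mk :: "nat \<Rightarrow> nat \<Rightarrow> nat \<Rightarrow> real" where
  "mk n k q = measure_pmf.prob (path_pmf k) {xs. alive n xs \<and> last xs = q}"

lemma mk_nonneg: "0 \<le> mk n k q" by (simp add: mk_def)

lemma split_alive:
  fixes f :: "nat \<Rightarrow> real"
  assumes "xs \<noteq> []"
  shows "(if alive n xs then f (last xs) else 0) =
         (\<Sum>p<n. f p * indicator {xs. alive n xs \<and> last xs = p} xs)"
proof (cases "alive n xs")
  case True
  have "last xs < n" using True assms unfolding alive_def by (simp add: last_conv_nth)
  then have "(\<Sum>p<n. f p * indicator {xs. alive n xs \<and> last xs = p} xs)
        = (\<Sum>p<n. (if p = last xs then f p else 0))"
    using True by (intro sum.cong) (auto simp: indicator_def)
  also have "\<dots> = f (last xs)" using \<open>last xs < n\<close> by simp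
  finally show ?thesis using True by simp
next
  case False
  then show ?thesis by (simp add: indicator_def)
qed

lemma nn_alive:
  fixes f :: "nat \<Rightarrow> real"
  assumes "\<And>p. 0 \<le> f p"
  shows "(\<integral>\<^sup>+xs. ennreal (if alive n xs then f (last xs) else 0) \<partial>measure_pmf (path_pmf k))
       = (\<Sum>p<n. ennreal (f p) * emeasure (measure_pmf (path_pmf k)) {xs. alive n xs \<and> last xs = p})"
proof -
  have "(\<integral>\<^sup>+xs. ennreal (if alive n xs then f (last xs) else 0) \<partial>measure_pmf (path_pmf k))
      = (\<integral>\<^sup>+xs. (\<Sum>p<n. ennreal (f p) * indicator {xs. alive n xs \<and> last xs = p} xs) \<partial>measure_pmf (path_pmf k))"
  proof (intro nn_integral_cong_AE AE_pmfI)
    fix xs assume "xs \<in> set_pmf (path_pmf k)"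
    then have "xs \<noteq> []" using path_len by fastforce
    then have "(if alive n xs then f (last xs) else 0) =
         (\<Sum>p<n. f p * indicator {xs. alive n xs \<and> last xs = p} xs)" by (rule split_alive)
    then show "ennreal (if alive n xs then f (last xs) else 0) =
         (\<Sum>p<n. ennreal (f p) * indicator {xs. alive n xs \<and> last xs = p} xs)"
      using assms by (simp add: ennreal_mult'' ennreal_indicator sum_nonneg)
  qed
  also have "\<dots> = (\<Sum>p<n. ennreal (f p) * emeasure (measure_pmf (path_pmf k)) {xs. alive n xs \<and> last xs = p})"
    apply (subst nn_integral_sum)
     apply simp
    apply (intro sum.cong refl)
    apply (rule nn_integral_cmult_indicator)
    apply simp
    done
  finally show ?thesis .
qed

lemma mk_Suc:
  assumes "q < n"
  shows "mk n (Suc k) q = (\<Sum>p<n. mk n k p * pmf (trans_pmf p) q)"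
proof -
  have pre: "(\<lambda>y. xs @ [y]) -` {xs. alive n xs \<and> last xs = q} = (if alive n xs then {q} else {})" for xs
    using assms by (auto simp: alive_snoc)
  have "ennreal (mk n (Suc k) q) = emeasure (measure_pmf (path_pmf (Suc k))) {xs. alive n xs \<and> last xs = q}"
    by (simp add: mk_def measure_pmf.emeasure_eq_measure)
  also have "\<dots> = (\<integral>\<^sup>+xs. emeasure (measure_pmf (trans_pmf (last xs))) ((\<lambda>y. xs @ [y]) -` {xs. alive n xs \<and> last xs = q}) \<partial>measure_pmf (path_pmf k))"
    by simp
  also have "\<dots> = (\<integral>\<^sup>+xs. ennreal (if alive n xs then pmf (trans_pmf (last xs)) q else 0) \<partial>measure_pmf (path_pmf k))"
    apply (intro nn_integral_cong)
    apply (subst pre)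
    apply (simp add: emeasure_pmf_single)
    done
  also have "\<dots> = (\<Sum>p<n. ennreal (pmf (trans_pmf p) q) * emeasure (measure_pmf (path_pmf k)) {xs. alive n xs \<and> last xs = p})"
    by (rule nn_alive) simp
  also have "\<dots> = (\<Sum>p<n. ennreal (mk n k p * pmf (trans_pmf p) q))"
    by (intro sum.cong refl) (simp add: mk_def measure_pmf.emeasure_eq_measure ennreal_mult'' mult.commute)
  also have "\<dots> = ennreal (\<Sum>p<n. mk n k p * pmf (trans_pmf p) q)"
    by (rule sum_ennreal) (simp add: mk_nonneg)
  finally show ?thesis
    by (subst (asm) ennreal_inj) (auto simp: mk_nonneg sum_nonneg)
qed

lemma mk_0: "2 \<le> n \<Longrightarrow> mk n 0 q = (if q = 1 then 1 else 0)"
  by (simp add: mk_def alive_def indicator_def)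

lemma super:
  assumes n: "2 \<le> n"
    and b: "\<And>j p. p < n \<Longrightarrow> (\<Sum>q<n. pmf (trans_pmf p) q * U j q) \<le> U (Suc j) p"
  shows "(\<Sum>q<n. mk n k q * U j q) \<le> U (j + k) 1"
proof (induction k arbitrary: j)
  case 0
  have "(\<Sum>q<n. mk n 0 q * U j q) = (\<Sum>q<n. (if q = 1 then U j 1 else 0))"
    using n by (intro sum.cong) (auto simp: mk_0)
  also have "\<dots> = U j 1" using n by simp
  finally show ?case by simp
next
  case (Suc k)
  have "(\<Sum>q<n. mk n (Suc k) q * U j q) = (\<Sum>q<n. (\<Sum>p<n. mk n k p * pmf (trans_pmf p) q) * U j q)"
    by (intro sum.cong) (auto simp: mk_Suc)
  also have "\<dots> = (\<Sum>q<n. \<Sum>p<n. mk n k p * pmf (trans_pmf p) q * U j q)"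
    by (simp add: sum_distrib_right)
  also have "\<dots> = (\<Sum>p<n. \<Sum>q<n. mk n k p * pmf (trans_pmf p) q * U j q)"
    by (rule sum.swap)
  also have "\<dots> = (\<Sum>p<n. mk n k p * (\<Sum>q<n. pmf (trans_pmf p) q * U j q))"
    by (simp add: sum_distrib_left mult.assoc)
  also have "\<dots> \<le> (\<Sum>p<n. mk n k p * U (Suc j) p)"
    by (intro sum_mono mult_left_mono b) (auto simp: mk_nonneg)
  also have "\<dots> \<le> U (Suc j + k) 1" by (rule Suc.IH)
  finally show ?case by simp
qed


lemma event_pre:
  assumes len: "length xs = Suc (Suc h)"
  shows "(xs @ [y] \<in> {xs. \<forall>t<length xs. real t < real h + 3/2 \<longrightarrow> xs ! t < n}) = alive n xs"
proof
  assume A: "xs @ [y] \<in> {xs. \<forall>t<length xs. real t < real h + 3/2 \<longrightarrow> xs ! t < n}"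
  show "alive n xs" unfolding alive_def
  proof (intro allI impI)
    fix t assume t: "t < length xs"
    then have "real t < real h + 3/2" using len by simp
    then have "(xs @ [y]) ! t < n" using A t by auto
    then show "xs ! t < n" using t by (simp add: nth_append)
  qed
next
  assume A: "alive n xs"
  show "xs @ [y] \<in> {xs. \<forall>t<length xs. real t < real h + 3/2 \<longrightarrow> xs ! t < n}"
  proof (safe)
    fix t assume t: "t < length (xs @ [y])" and r: "real t < real h + 3/2"
    from r have "t < Suc (Suc h)" by linarith
    then have "t < length xs" using len by simp
    then show "(xs @ [y]) ! t < n" using A by (simp add: nth_append alive_def)
  qed
qed

lemma frame:
  assumes n: "2 \<le> n"
    and a: "\<And>p. p < n \<Longrightarrow> 1 \<le> U 0 p"
    and b: "\<And>j p. p < n \<Longrightarrow> (\<Sum>q<n. pmf (trans_pmf p) q * U j q) \<le> U (Suc j) p"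
  shows "prob_tau_ge n ((real n ^ 2 - real n + 3) / 2) \<le> U (n * (n - 1) div 2 + 1) 1"
proof -
  define h where "h = n * (n - 1) div 2"
  have ev: "even (n * (n - 1))" by auto
  then have h2: "n * (n - 1) = 2 * h" unfolding h_def by simp
  have A: "real n ^ 2 - real n = real (n * (n - 1))"
    using n by (simp add: of_nat_diff power2_eq_square algebra_simps)
  have B: "real (n * (n - 1)) = 2 * real h" using arg_cong[OF h2, of real] by simp
  have x: "(real n ^ 2 - real n + 3) / 2 = real h + 3/2" by (simp only: A B) (simp add: field_simps)
  have cc: "\<lceil>real h + 3/2\<rceil> = int h + 2"
    by (rule ceiling_unique) simp_all
  have c: "nat \<lceil>real h + 3/2\<rceil> = Suc (Suc h)"
    by (simp add: cc)
  define E where "E = {xs. \<forall>t<length xs. real t < real h + 3/2 \<longrightarrow> xs ! t < n}"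
  have "ennreal (prob_tau_ge n ((real n ^ 2 - real n + 3) / 2))
        = emeasure (measure_pmf (path_pmf (Suc (Suc h)))) E"
    unfolding prob_tau_ge_def x c E_def by (simp only: measure_pmf.emeasure_eq_measure)
  also have "\<dots> = (\<integral>\<^sup>+xs. emeasure (measure_pmf (trans_pmf (last xs))) ((\<lambda>y. xs @ [y]) -` E) \<partial>measure_pmf (path_pmf (Suc h)))"
    by (simp only: path_pmf.simps(2)[of "Suc h"] emeasure_bind_pmf emeasure_map_pmf)
  also have "\<dots> = (\<integral>\<^sup>+xs. ennreal (if alive n xs then (\<lambda>_. 1::real) (last xs) else 0) \<partial>measure_pmf (path_pmf (Suc h)))"
  proof (intro nn_integral_cong_AE AE_pmfI)
    fix xs assume "xs \<in> set_pmf (path_pmf (Suc h))"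
    then have len: "length xs = Suc (Suc h)" by (rule path_len)
    have "(\<lambda>y. xs @ [y]) -` E = (if alive n xs then UNIV else {})"
      using event_pre[OF len] unfolding E_def by auto
    then show "emeasure (measure_pmf (trans_pmf (last xs))) ((\<lambda>y. xs @ [y]) -` E) =
       ennreal (if alive n xs then (\<lambda>_. 1::real) (last xs) else 0)" by simp
  qed
  also have "\<dots> = (\<Sum>p<n. ennreal 1 * emeasure (measure_pmf (path_pmf (Suc h))) {xs. alive n xs \<and> last xs = p})"
    by (rule nn_alive) simp
  also have "\<dots> = ennreal (\<Sum>p<n. mk n (Suc h) p)"
    by (simp add: mk_def measure_pmf.emeasure_eq_measure)
  finally have eq: "prob_tau_ge n ((real n ^ 2 - real n + 3) / 2) = (\<Sum>p<n. mk n (Suc h) p)"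
    by (subst (asm) ennreal_inj) (auto simp: mk_nonneg sum_nonneg prob_tau_ge_def)
  have "(\<Sum>p<n. mk n (Suc h) p) \<le> (\<Sum>p<n. mk n (Suc h) p * U 0 p)"
    by (intro sum_mono) (metis a lessThan_iff mk_nonneg mult_le_cancel_left1 mult.commute not_le order.strict_iff_not)
  also have "\<dots> \<le> U (0 + Suc h) 1" by (rule super[where U=U, OF n b])
  finally show ?thesis using eq by (simp add: h_def)
qed




definition md :: "real \<Rightarrow> nat \<Rightarrow> real \<Rightarrow> real" where
  "md b M x = cos b ^ M * cos (b * x)"

lemma md_Suc: "md b (Suc M) x = (md b M (x - 1) + md b M (x + 1)) / 2"
proof -
  have e: "cos b * cos (b * x) = (cos (b * (x - 1)) + cos (b * (x + 1))) / 2"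
    by (simp add: right_diff_distrib distrib_left cos_add cos_diff)
  have "md b (Suc M) x = cos b ^ M * (cos b * cos (b * x))" by (simp add: md_def)
  also have "\<dots> = (cos b ^ M * cos (b * (x - 1)) + cos b ^ M * cos (b * (x + 1))) / 2"
    by (simp only: e) (simp add: distrib_left add_divide_distrib)
  finally show ?thesis by (simp add: md_def)
qed

lemma md_neg: "md b M (- x) = md b M x"
  by (simp add: md_def)

definition al :: "nat \<Rightarrow> real" where "al n = pi / (2 * real n)"

definition Phi :: "nat \<Rightarrow> real \<Rightarrow> nat \<Rightarrow> real" where
  "Phi n x M = sqrt 2 * md (al n) M x - 3 * sqrt 2 / 4 * md (3 * al n) M x
     + md (4 * al n) M x - sqrt 2 / 4 * md (5 * al n) M x"

lemma Phi_Suc: "Phi n x (Suc M) = (Phi n (x - 1) M + Phi n (x + 1) M) / 2"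
  unfolding Phi_def md_Suc by (simp add: algebra_simps add_divide_distrib diff_divide_distrib)

lemma Phi_neg: "Phi n (- x) M = Phi n x M"
  unfolding Phi_def md_neg ..


lemma cos5: "cos (5 * (t::real)) = 2 * cos t * cos (4 * t) - cos (3 * t)"
proof -
  have a: "cos (4 * t + t) = cos (4 * t) * cos t - sin (4 * t) * sin t" by (rule cos_add)
  have b: "cos (4 * t - t) = cos (4 * t) * cos t + sin (4 * t) * sin t" by (rule cos_diff)
  have "4 * t + t = 5 * t" "4 * t - t = 3 * t" by simp_all
  then show ?thesis using a b by simp
qed

lemma cos4: "cos (4 * (t::real)) = 2 * (2 * cos t ^ 2 - 1) ^ 2 - 1"
proof -
  have "cos (4 * t) = cos (2 * (2 * t))" by simp
  also have "\<dots> = 2 * cos (2 * t) ^ 2 - 1" by (rule cos_double_cos)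
  finally show ?thesis by (simp add: cos_double_cos)
qed

lemma Phi_0:
  assumes n: "1 \<le> n" and x: "\<bar>x\<bar> \<le> real n"
  shows "1 \<le> Phi n x 0"
proof -
  define t where "t = al n * x"
  define y where "y = cos t"
  define s where "s = sqrt (2::real)"
  have s2: "s * s = 2" unfolding s_def by simp
  have s0: "0 \<le> s" unfolding s_def by simp
  have "\<bar>t\<bar> \<le> pi / 2"
  proof -
    have "\<bar>t\<bar> = pi / (2 * real n) * \<bar>x\<bar>" unfolding t_def al_def using n by (simp add: abs_mult)
    also have "\<dots> \<le> pi / (2 * real n) * real n" using x by (intro mult_left_mono) auto
    also have "\<dots> = pi / 2" using n by (simp add: field_simps)
    finally show ?thesis .
  qed
  then have y0: "0 \<le> y" unfolding y_def by (intro cos_ge_zero) auto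
  have y1: "y \<le> 1" unfolding y_def by simp
  have c3: "cos (3 * t) = 4 * y ^ 3 - 3 * y" unfolding y_def by (rule cos_treble_cos)
  have c4: "cos (4 * t) = 2 * (2 * y ^ 2 - 1) ^ 2 - 1" unfolding y_def by (rule cos4)
  have c5: "cos (5 * t) = 2 * y * (2 * (2 * y ^ 2 - 1) ^ 2 - 1) - (4 * y ^ 3 - 3 * y)"
    using cos5[of t] c3 c4 unfolding y_def by simp
  have m1: "md (al n) 0 x = y" by (simp add: md_def t_def y_def)
  have m3: "md (3 * al n) 0 x = cos (3 * t)" by (simp add: md_def t_def mult.assoc)
  have m4: "md (4 * al n) 0 x = cos (4 * t)" by (simp add: md_def t_def mult.assoc)
  have m5: "md (5 * al n) 0 x = cos (5 * t)" by (simp add: md_def t_def mult.assoc)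
  have P: "Phi n x 0 = s * y - 3 * s / 4 * (4 * y ^ 3 - 3 * y) + (2 * (2 * y ^ 2 - 1) ^ 2 - 1)
      - s / 4 * (2 * y * (2 * (2 * y ^ 2 - 1) ^ 2 - 1) - (4 * y ^ 3 - 3 * y))"
    by (simp only: Phi_def m1 m3 m4 m5 c3 c4 c5 s_def[symmetric])
  have Q: "Phi n x 0 - 1 = 2 * s * y * (1 - y ^ 2) * (2 * y ^ 2 + 1) - 4 * (s * s) * y ^ 2 * (1 - y ^ 2)"
    unfolding P s2 by algebra
  have R: "2 * s * y * (1 - y ^ 2) * ((s * y - 1) ^ 2) = 2 * s * y * (1 - y ^ 2) * (2 * y ^ 2 + 1) - 4 * (s * s) * y ^ 2 * (1 - y ^ 2)"
  proof -
    have "(s * y - 1) ^ 2 = (s * s) * y ^ 2 - 2 * s * y + 1" by algebra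
    then have "(s * y - 1) ^ 2 = 2 * y ^ 2 - 2 * s * y + 1" unfolding s2 .
    then show ?thesis unfolding s2 by algebra
  qed
  have "Phi n x 0 - 1 = 2 * s * y * (1 - y ^ 2) * ((s * y - 1) ^ 2)" using Q R by simp
  moreover have "0 \<le> 2 * s * y * (1 - y ^ 2) * ((s * y - 1) ^ 2)"
    using s0 y0 y1 by (intro mult_nonneg_nonneg) (auto simp: power_le_one)
  ultimately show ?thesis by simp
qed


lemma Phi_ge1:
  assumes n: "1 \<le> n"
  shows "\<bar>x\<bar> + real M \<le> real n \<Longrightarrow> 1 \<le> Phi n x M"
proof (induction M arbitrary: x)
  case 0
  then show ?case using Phi_0[OF n] by simp
next
  case (Suc M)
  have "1 \<le> Phi n (x - 1) M" using Suc.prems by (intro Suc.IH) auto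
  moreover have "1 \<le> Phi n (x + 1) M" using Suc.prems by (intro Suc.IH) auto
  ultimately show ?case by (simp add: Phi_Suc)
qed

lemma Phi_bdry:
  assumes n: "4 \<le> n"
  shows "0 \<le> Phi n (real n) M"
proof -
  have an: "al n * real n = pi / 2" using n by (simp add: al_def)
  have e1: "cos (al n * real n) = 0" unfolding an by simp
  have h3: "3 * al n * real n = 3/2 * pi"
  proof -
    have "3 * al n * real n = 3 * (al n * real n)" by simp
    also have "\<dots> = 3/2 * pi" unfolding an by simp
    finally show ?thesis .
  qed
  have e3: "cos (3 * al n * real n) = 0" by (simp only: h3 cos_3over2_pi)
  have h4: "4 * al n * real n = 2 * pi"
  proof -
    have "4 * al n * real n = 4 * (al n * real n)" by simp
    also have "\<dots> = 2 * pi" unfolding an by simp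
    finally show ?thesis .
  qed
  have e4: "cos (4 * al n * real n) = 1" by (simp only: h4 cos_two_pi)
  have h5: "5 * al n * real n = pi / 2 + 2 * pi"
  proof -
    have "5 * al n * real n = 5 * (al n * real n)" by simp
    also have "\<dots> = pi / 2 + 2 * pi" unfolding an by simp
    finally show ?thesis .
  qed
  have e5: "cos (5 * al n * real n) = 0" by (simp only: h5 cos_periodic cos_pi_half)
  have "Phi n (real n) M = cos (4 * al n) ^ M"
    unfolding Phi_def md_def using e1 e3 e4 e5 by simp
  moreover have "0 \<le> cos (4 * al n)"
  proof (rule cos_ge_zero)
    have "0 \<le> al n" by (simp add: al_def)
    then show "- (pi / 2) \<le> 4 * al n" using pi_gt_zero by linarith
    have "4 * al n = 2 * pi / real n" using n by (simp add: al_def)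
    also have "\<dots> \<le> 2 * pi / 4" using n by (intro divide_left_mono) auto
    finally show "4 * al n \<le> pi / 2" by simp
  qed
  ultimately show ?thesis by simp
qed

lemma expand:
  fixes f :: "real \<Rightarrow> nat \<Rightarrow> real"
  assumes rec: "\<And>x M. f x (Suc M) = (f (x - 1) M + f (x + 1) M) / 2"
  shows "r < M \<Longrightarrow> f z M = (\<Sum>i\<le>r. (1/2)^(i+1) * f (z - 1 + real i) (M - 1 - i))
                        + (1/2)^(r+1) * f (z + real r + 1) (M - 1 - r)"
proof (induction r)
  case 0
  then obtain M' where M: "M = Suc M'" by (cases M) auto
  show ?case using rec[of z M'] by (simp add: M)
next
  case (Suc r)
  then have IH: "f z M = (\<Sum>i\<le>r. (1/2)^(i+1) * f (z - 1 + real i) (M - 1 - i))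
                        + (1/2)^(r+1) * f (z + real r + 1) (M - 1 - r)" by simp
  define M' where "M' = M - 1 - Suc r"
  have MM: "M - 1 - r = Suc M'" using Suc.prems unfolding M'_def by simp
  have E: "f (z + real r + 1) (M - 1 - r) = (f (z + real r) M' + f (z + real r + 2) M') / 2"
    unfolding MM rec by (simp add: add.assoc)
  have a1: "z - 1 + real (Suc r) = z + real r" by simp
  have a2: "z + real (Suc r) + 1 = z + real r + 2" by simp
  have T: "(1/2)^(r+1) * f (z + real r + 1) (M - 1 - r) =
      (1/2)^(Suc r+1) * f (z - 1 + real (Suc r)) (M - 1 - Suc r)
      + (1/2)^(Suc r+1) * f (z + real (Suc r) + 1) (M - 1 - Suc r)"
    unfolding a1 a2 E M'_def[symmetric] by (simp add: field_simps)
  show ?case unfolding IH T by simp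
qed


lemma cos_ub: "cos (x::real) \<le> 1 - x^2/2 + x^4/24"
proof -
  obtain t where t: "cos x = (\<Sum>m<4. cos_coeff m * x ^ m) + (cos (t + 1/2 * real 4 * pi) / fact 4) * x ^ 4"
    using Maclaurin_cos_expansion[of x 4] by blast
  have c: "cos_coeff 0 = 1" "cos_coeff (Suc 0) = 0" "cos_coeff 2 = -1/2" "cos_coeff 3 = 0"
    by (simp_all add: cos_coeff_def)
  have l4: "{..<4::nat} = {0,1,2,3}" by auto
  have s: "(\<Sum>m<4. cos_coeff m * x ^ m) = 1 - x^2/2"
    unfolding l4 by (simp add: c)
  have f: "(fact 4 :: real) = 24" by (simp add: eval_nat_numeral)
  have "(cos (t + 1/2 * real 4 * pi) / fact 4) * x ^ 4 \<le> (1 / 24) * x ^ 4"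
    unfolding f by (intro mult_right_mono divide_right_mono) (auto simp: zero_le_even_power)
  then show ?thesis using t s by simp
qed

lemma cos_pow_le_exp:
  assumes "0 \<le> cos b" "cos b \<le> 1 - c"
  shows "cos b ^ M \<le> exp (- (real M * c))"
proof -
  have "1 - c \<le> exp (- c)" using exp_ge_add_one_self[of "-c"] by simp
  then have "cos b ^ M \<le> exp (- c) ^ M" using assms by (intro power_mono) auto
  also have "\<dots> = exp (- (real M * c))" by (simp add: exp_of_nat_mult[symmetric])
  finally show ?thesis .
qed

lemma Phi_final:
  assumes n: "4 \<le> n"
  shows "Phi n 0 (n * n) \<le> 1 / 2"
proof -
  define a where "a = al n"
  define M where "M = n * n"
  define s where "s = sqrt (2::real)"
  have pi1: "3.141592653588 \<le> pi" and pi2: "pi \<le> 3.1415926535899" using pi_approx by auto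
  have n0: "0 < real n" using n by simp
  have a0: "0 < a" unfolding a_def al_def using n by simp
  have aM: "real M * a ^ 2 = pi ^ 2 / 4"
    unfolding a_def al_def M_def using n0 by (simp add: power2_eq_square field_simps)
  have P: "Phi n 0 M = s * cos a ^ M - 3 * s / 4 * cos (3 * a) ^ M + cos (4 * a) ^ M - s / 4 * cos (5 * a) ^ M"
    unfolding Phi_def md_def a_def s_def by simp
  have s0: "0 \<le> s" unfolding s_def by simp
  have s1: "s \<le> 142 / 100"
  proof -
    have "s \<le> sqrt ((142 / 100) ^ 2)" unfolding s_def by (intro real_sqrt_le_mono) (simp add: power2_eq_square)
    then show ?thesis by simp
  qed
  have "3 * a \<le> pi / 2"
  proof -
    have "3 * a = 3 * pi / (2 * real n)" unfolding a_def al_def by simp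
    also have "\<dots> \<le> 3 * pi / (2 * 4)" using n by (intro divide_left_mono) auto
    finally show ?thesis using pi_gt_zero by linarith
  qed
  then have C3: "0 \<le> cos (3 * a) ^ M" using a0 by (intro zero_le_power cos_ge_zero) auto
  have C5: "0 \<le> cos (5 * a) ^ M"
  proof (cases "n = 4")
    case True
    then have "even M" unfolding M_def by simp
    then show ?thesis by (rule zero_le_even_power)
  next
    case False
    then have n5: "5 \<le> n" using n by simp
    have "5 * a = 5 * pi / (2 * real n)" unfolding a_def al_def by simp
    also have "\<dots> \<le> 5 * pi / (2 * 5)" using n5 by (intro divide_left_mono) auto
    finally have "5 * a \<le> pi / 2" by simp
    then show ?thesis using a0 by (intro zero_le_power cos_ge_zero) auto
  qed
  have C1: "cos a ^ M \<le> (20 / 23) ^ 8"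
  proof -
    have "a = pi / (2 * real n)" unfolding a_def al_def ..
    also have "\<dots> \<le> pi / (2 * 4)" using n by (intro divide_left_mono) auto
    finally have a4: "a \<le> 2 / 5" using pi2 by simp
    have "a ^ 2 \<le> (2/5) ^ 2" using a0 a4 by (intro power_mono) auto
    then have "a ^ 4 \<le> a ^ 2 * (4 / 25)" using a0
      by (simp add: power2_eq_square eval_nat_numeral mult_left_mono)
    moreover have "0 \<le> a ^ 2" by simp
    ultimately have "cos a \<le> 1 - 49 / 100 * a ^ 2" using cos_ub[of a] by linarith
    moreover have "0 \<le> cos a" using a0 a4 pi1 by (intro cos_ge_zero) auto
    ultimately have "cos a ^ M \<le> exp (- (real M * (49 / 100 * a ^ 2)))"
      by (intro cos_pow_le_exp) auto
    also have "\<dots> = exp (- (49 / 400 * pi ^ 2))" using aM by (simp add: algebra_simps)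
    also have "\<dots> \<le> exp (- (6 / 5))"
    proof -
      have p: "(157/50::real) \<le> pi" using pi1 by simp
      have "157/50 * (157/50) \<le> pi * pi" by (rule mult_mono[OF p p]) auto
      moreover have "pi ^ 2 = pi * pi" by (simp add: power2_eq_square)
      ultimately have "(49/5::real) \<le> pi ^ 2" by linarith
      then have "- (49 / 400 * pi ^ 2) \<le> - (6 / 5)" by linarith
      then show ?thesis by simp
    qed
    also have "\<dots> \<le> (20 / 23) ^ 8"
    proof -
      have "(23 / 20 :: real) ^ 8 \<le> exp (3 / 20) ^ 8"
        using exp_ge_add_one_self[of "3/20"] by (intro power_mono) auto
      also have "\<dots> = exp (6 / 5)" by (simp add: exp_of_nat_mult[symmetric])
      finally have "(23 / 20 :: real) ^ 8 \<le> exp (6 / 5)" .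
      then have "inverse (exp (6 / 5)) \<le> inverse ((23 / 20 :: real) ^ 8)"
        by (intro le_imp_inverse_le) auto
      then show ?thesis by (simp add: exp_minus power_divide)
    qed
    finally show ?thesis .
  qed
  have C4: "cos (4 * a) ^ M \<le> 1 / 256"
  proof -
    define b where "b = 4 * a"
    have "b = 2 * pi / real n" unfolding b_def a_def al_def by simp
    also have "\<dots> \<le> 2 * pi / 4" using n by (intro divide_left_mono) auto
    finally have b4: "b \<le> pi / 2" by simp
    have b0: "0 < b" unfolding b_def using a0 by simp
    have "b ^ 2 \<le> 2 ^ 2" using b0 b4 pi2 by (intro power_mono) auto
    then have "b ^ 4 \<le> b ^ 2 * 4" using b0
      by (simp add: power2_eq_square eval_nat_numeral mult_left_mono)
    moreover have "0 \<le> b ^ 2" by simp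
    ultimately have "cos b \<le> 1 - b ^ 2 / 3" using cos_ub[of b] by linarith
    moreover have "0 \<le> cos b" using b0 b4 by (intro cos_ge_zero) auto
    ultimately have "cos b ^ M \<le> exp (- (real M * (b ^ 2 / 3)))"
      by (intro cos_pow_le_exp) auto
    also have "real M * (b ^ 2 / 3) = 16 / 3 * (real M * a ^ 2)"
      unfolding b_def by (simp add: power2_eq_square)
    also have "\<dots> = 4 / 3 * pi ^ 2" unfolding aM by simp
    also have "exp (- (4 / 3 * pi ^ 2)) \<le> exp (- 12)"
    proof -
      have p: "(3::real) \<le> pi" using pi1 by simp
      have "3 * 3 \<le> pi * pi" by (rule mult_mono[OF p p]) auto
      moreover have "pi ^ 2 = pi * pi" by (simp add: power2_eq_square)
      ultimately have "(9::real) \<le> pi ^ 2" by linarith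
      then have "- (4 / 3 * pi ^ 2) \<le> - 12" by linarith
      then show ?thesis by simp
    qed
    also have "\<dots> \<le> 1 / 256"
    proof -
      have "(4::real) ^ 4 \<le> exp 3 ^ 4"
        using exp_ge_add_one_self[of 3] by (intro power_mono) auto
      also have "\<dots> = exp 12" by (simp add: exp_of_nat_mult[symmetric])
      finally have "(256::real) \<le> exp 12" by simp
      then have "inverse (exp 12) \<le> inverse (256::real)"
        by (intro le_imp_inverse_le) auto
      then show ?thesis by (simp add: exp_minus)
    qed
    finally show ?thesis unfolding b_def .
  qed
  have "Phi n 0 M \<le> s * (20 / 23) ^ 8 + 1 / 256"
    unfolding P using C1 C3 C4 C5 s0
    by (smt (verit) mult_left_mono mult_nonneg_nonneg divide_nonneg_nonneg)
  also have "\<dots> \<le> 142 / 100 * (20 / 23) ^ 8 + 1 / 256"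
    using s1 by simp
  also have "\<dots> \<le> 1 / 2" by (simp add: power_divide)
  finally show ?thesis unfolding M_def .
qed


definition Uf :: "nat \<Rightarrow> nat \<Rightarrow> nat \<Rightarrow> real" where
  "Uf n j p = Phi n (real (max p 1) - 1) (2 * j + n - 1 - max p 1)"

lemma Uf_a:
  assumes n: "4 \<le> n" and p: "p < n"
  shows "1 \<le> Uf n 0 p"
  unfolding Uf_def using n p by (intro Phi_ge1) (auto simp: max_def of_nat_diff)

lemma sum_shift:
  fixes g :: "nat \<Rightarrow> real"
  assumes "b \<le> n"
  shows "(\<Sum>q<n. (if b \<le> q then g q else 0)) = (\<Sum>i<n - b. g (b + i))"
proof -
  have "(\<Sum>q<n. (if b \<le> q then g q else 0)) = (\<Sum>q\<in>{b..<n}. g q)"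
    by (rule sum.mono_neutral_cong_right) auto
  also have "\<dots> = (\<Sum>i<n - b. g (b + i))"
  proof -
    have "{b..<n} = (\<lambda>i. b + i) ` {..<n - b}"
    proof (rule set_eqI)
      fix x
      show "x \<in> {b..<n} \<longleftrightarrow> x \<in> (\<lambda>i. b + i) ` {..<n - b}"
      proof
        assume "x \<in> {b..<n}"
        then show "x \<in> (\<lambda>i. b + i) ` {..<n - b}" by (intro image_eqI[of _ _ "x - b"]) auto
      qed auto
    qed
    moreover have "inj_on (\<lambda>i. b + i) {..<n - b}" by (auto simp: inj_on_def)
    ultimately show ?thesis by (simp add: sum.reindex)
  qed
  finally show ?thesis .
qed

lemma Uf_b:
  assumes n: "4 \<le> n" and p: "p < n"
  shows "(\<Sum>q<n. pmf (trans_pmf p) q * Uf n j q) \<le> Uf n (Suc j) p"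
proof -
  define b where "b = tb p"
  have b1: "1 \<le> b" and bn: "b \<le> n - 1" using n p unfolding b_def tb_def by auto
  have "(\<Sum>q<n. pmf (trans_pmf p) q * Uf n j q)
      = (\<Sum>q<n. (if b \<le> q then (1/2::real)^(q - b + 1) * Uf n j q else 0))"
    unfolding pmf_trans b_def by (intro sum.cong) auto
  also have "\<dots> = (\<Sum>i<n - b. (1/2::real)^(b + i - b + 1) * Uf n j (b + i))"
    using bn by (intro sum_shift) auto
  also have "\<dots> = (\<Sum>i\<le>n - 1 - b. (1/2)^(i+1) * Phi n (real b - 1 + real i) (2 * j + n - b - 1 - i))"
  proof -
    have e: "{..<n - b} = {..n - 1 - b}" using bn n by auto
    show ?thesis unfolding e
    proof (intro sum.cong refl)
      fix i assume "i \<in> {..n - 1 - b}"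
      have m: "max (b + i) 1 = b + i" using b1 by simp
      have k: "2 * j + n - 1 - (b + i) = 2 * j + n - b - 1 - i" by simp
      have r: "real (b + i) - 1 = real b - 1 + real i" by simp
      have e: "b + i - b + 1 = i + 1" by simp
      show "(1/2::real)^(b + i - b + 1) * Uf n j (b + i)
          = (1/2)^(i+1) * Phi n (real b - 1 + real i) (2 * j + n - b - 1 - i)"
        unfolding Uf_def m k r e ..
    qed
  qed
  also have "\<dots> \<le> Phi n (real b) (2 * j + n - b)"
  proof -
    have "Phi n (real b) (2 * j + n - b) =
      (\<Sum>i\<le>n - 1 - b. (1/2)^(i+1) * Phi n (real b - 1 + real i) (2 * j + n - b - 1 - i))
      + (1/2)^(n - 1 - b + 1) * Phi n (real b + real (n - 1 - b) + 1) (2 * j + n - b - 1 - (n - 1 - b))"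
      using bn b1 n by (intro expand Phi_Suc) auto
    moreover have "real b + real (n - 1 - b) + 1 = real n" using bn n by (simp add: of_nat_diff)
    moreover have "0 \<le> Phi n (real n) (2 * j + n - b - 1 - (n - 1 - b))" by (rule Phi_bdry[OF n])
    ultimately show ?thesis by simp
  qed
  also have "\<dots> = Uf n (Suc j) p"
  proof (cases "p \<le> 1")
    case True
    then have b: "b = 1" unfolding b_def tb_def by simp
    have "Uf n (Suc j) p = Phi n 0 (Suc (2 * j + n - 1))"
      unfolding Uf_def using True n by (simp add: max_def)
    also have "\<dots> = Phi n 1 (2 * j + n - 1)"
      unfolding Phi_Suc using Phi_neg[of n 1] by simp
    finally show ?thesis using b by simp
  next
    case False
    then have b: "b = p - 1" unfolding b_def tb_def by simp
    show ?thesis unfolding Uf_def b using False n p by (simp add: max_def of_nat_diff)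
  qed
  finally show ?thesis .
qed

theorem lemma6:
  fixes n :: nat
  assumes "n \<ge> 2"
  shows "prob_tau_ge n ((real n ^ 2 - real n + 3) / 2) \<le> 1 / 2"
proof -
  consider "n = 2" | "n = 3" | "4 \<le> n" using assms by linarith
  then show ?thesis
  proof cases
    case 1
    have "prob_tau_ge n ((real n ^ 2 - real n + 3) / 2) \<le> (\<lambda>j p. (1/2::real) ^ j) (n * (n - 1) div 2 + 1) 1"
    proof (rule frame)
      fix j p assume "p < n"
      then have "p \<le> 1" using 1 by simp
      then have "tb p = 1" by (simp add: tb_def)
      then show "(\<Sum>q<n. pmf (trans_pmf p) q * (1/2::real) ^ j) \<le> (1/2) ^ Suc j"
        using 1 by (simp add: pmf_trans lessThan_Suc numeral_2_eq_2)
    qed (use 1 in auto)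
    then show ?thesis using 1 by simp
  next
    case 2
    have "prob_tau_ge n ((real n ^ 2 - real n + 3) / 2) \<le> (\<lambda>j p. (3/4::real) ^ j) (n * (n - 1) div 2 + 1) 1"
    proof (rule frame)
      fix j p assume "p < n"
      then have "p \<le> 2" using 2 by simp
      then have "tb p = 1" by (auto simp: tb_def)
      then show "(\<Sum>q<n. pmf (trans_pmf p) q * (3/4::real) ^ j) \<le> (3/4) ^ Suc j"
        using 2 by (simp add: pmf_trans lessThan_Suc numeral_3_eq_3)
    qed (use 2 in auto)
    then show ?thesis using 2 by (simp add: power_divide)
  next
    case 3
    have "prob_tau_ge n ((real n ^ 2 - real n + 3) / 2) \<le> Uf n (n * (n - 1) div 2 + 1) 1"
      using 3 by (intro frame Uf_a Uf_b) auto
    also have "Uf n (n * (n - 1) div 2 + 1) 1 = Phi n 0 (n * n)"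
    proof -
      have ev: "even (n * (n - 1))" by auto
      then have "2 * (n * (n - 1) div 2 + 1) + n - 1 - 1 = n * (n - 1) + n" using 3 by simp
      also have "\<dots> = n * n" using 3 by (cases n) auto
      finally show ?thesis unfolding Uf_def by simp
    qed
    also have "\<dots> \<le> 1 / 2" using Phi_final[OF 3] .
    finally show ?thesis .
  qed
qed

end
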